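(* Let $p\ge q\ge 1$ be integers and $Q=\#^{p}-\#^{q}$. For $k\ge 1$ let $L(k)$ denote the maximal length of a binary word with exactly $k$ zeros that is not detected by $Q$. Then: (i) if $p\ge 2q+1$, then $L(k)=(k+1)p+q$ for all $k\ge1$; (ii) if $q\le p\le 2q+1$, then for all $\ell\ge 0$, $L(2\ell+1)=(\ell+2)p+(2\ell+1)q+\ell$, and for all $\ell\ge1$, $L(2\ell)=(\ell+1)p+(2\ell+1)q+\ell$. Consequently the $k$-critical length of $Q$ equals $L(k)+1$.
   Context: A seed is a finite word over $\{\#,-\}$ beginning and ending with $\#$ ($-$ is called a joker). A seed $Q$ of length $s$ matches a binary word $w$ at position $i$ ($1\le i\le |w|-s+1$) if $w[i+t-1]=1$ for every $t$ with $Q[t]=\#$; $Q$ detects $w$ if it matches $w$ at some position. The $k$-critical length of $Q$ is the minimal $m$ such that $Q$ detects every binary word of length $m$ with exactly $k$ zeros. *)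

theory Defs
  imports Main
begin

(* A seed is a list of booleans: True = '#', False = '-' (joker).
   A binary word is a list of booleans: True = 1, False = 0.
   Positions are 0-based here (position i corresponds to i+1 in the paper). *)

definition is_seed :: "bool list \<Rightarrow> bool" where
  "is_seed Q \<longleftrightarrow> Q \<noteq> [] \<and> hd Q \<and> last Q"

definition matches_at :: "bool list \<Rightarrow> bool list \<Rightarrow> nat \<Rightarrow> bool" where
  "matches_at Q w i \<longleftrightarrow> i + length Q \<le> length w \<and>
     (\<forall>t < length Q. Q ! t \<longrightarrow> w ! (i + t))"

definition detects :: "bool list \<Rightarrow> bool list \<Rightarrow> bool" where
  "detects Q w \<longleftrightarrow> (\<exists>i. matches_at Q w i)"

definition num_zeros :: "bool list \<Rightarrow> nat" where
  "num_zeros w = length (filter Not w)"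

definition max_undetected_len :: "bool list \<Rightarrow> nat \<Rightarrow> nat" where
  "max_undetected_len Q k =
     Max {length w | w. num_zeros w = k \<and> \<not> detects Q w}"

definition critical_length :: "bool list \<Rightarrow> nat \<Rightarrow> nat" where
  "critical_length Q k =
     (LEAST m. \<forall>w. length w \<ge> m \<longrightarrow> num_zeros w = k \<longrightarrow> detects Q w)"

definition seed_pq :: "nat \<Rightarrow> nat \<Rightarrow> bool list" where
  "seed_pq p q = replicate p True @ [False] @ replicate q True"

end

theory Submission imports Defs begin

definition ends :: "nat \<Rightarrow> bool list \<Rightarrow> bool" where
  "ends p u \<longleftrightarrow> (\<exists>v. u = v @ replicate p True)"

lemma seed_len[simp]: "length (seed_pq p q) = p + q + 1"
  by (simp add: seed_pq_def)

lemma seed_nth: "t < p + q + 1 \<Longrightarrow> seed_pq p q ! t = (t \<noteq> p)"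
  by (auto simp: seed_pq_def nth_append)

lemma matches_iff: "matches_at (seed_pq p q) w i \<longleftrightarrow>
   i + (p+q+1) \<le> length w \<and> (\<forall>t<p+q+1. t \<noteq> p \<longrightarrow> w!(i+t))"
  by (auto simp: matches_at_def seed_nth)

lemma det_rep: "detects (seed_pq p q) (replicate n True) \<longleftrightarrow> p+q+1 \<le> n"
  unfolding detects_def matches_iff
proof
  assume "\<exists>i. i + (p + q + 1) \<le> length (replicate n True) \<and>
        (\<forall>t<p + q + 1. t \<noteq> p \<longrightarrow> replicate n True ! (i + t))"
  then show "p+q+1 \<le> n" by auto
next
  assume "p+q+1 \<le> n"
  then show "\<exists>i. i + (p + q + 1) \<le> length (replicate n True) \<and>
        (\<forall>t<p + q + 1. t \<noteq> p \<longrightarrow> replicate n True ! (i + t))"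
    by (intro exI[of _ 0]) auto
qed

lemma det_app:
  assumes w: "w = u @ [False] @ replicate a True"
  shows "detects (seed_pq p q) w \<longleftrightarrow>
     detects (seed_pq p q) u \<or> p+q+1 \<le> a \<or> (q \<le> a \<and> ends p u)"
proof
  assume "detects (seed_pq p q) w"
  then obtain i where m: "i + (p+q+1) \<le> length w" and h: "\<forall>t<p+q+1. t \<noteq> p \<longrightarrow> w!(i+t)"
    by (auto simp: detects_def matches_iff)
  define n where "n = length u"
  have lw: "length w = n + 1 + a" using w n_def by simp
  show "detects (seed_pq p q) u \<or> p+q+1 \<le> a \<or> (q \<le> a \<and> ends p u)"
  proof (cases "i + (p+q+1) \<le> n")
    case True
    have "matches_at (seed_pq p q) u i"
      unfolding matches_iff
    proof (intro conjI allI impI)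
      show "i + (p+q+1) \<le> length u" using True n_def by simp
      fix t assume "t < p+q+1" "t \<noteq> p"
      with h have "w!(i+t)" by blast
      moreover have "i + t < length u" using True n_def \<open>t < p+q+1\<close> by simp
      ultimately show "u!(i+t)" using w by (simp add: nth_append)
    qed
    then show ?thesis by (auto simp: detects_def)
  next
    case False
    show ?thesis
    proof (cases "n < i")
      case True
      then show ?thesis using m lw by simp
    next
      case False2: False
      have wn: "\<not> w ! n" using w n_def by simp
      have "n - i = p"
      proof (rule ccontr)
        assume "n - i \<noteq> p"
        moreover have "n - i < p+q+1" using False False2 by simp
        ultimately have "w!(i + (n-i))" using h by blast
        with wn False2 show False by simp
      qed
      hence ip: "i = n - p" "p \<le> n" using False2 by auto
      have "q \<le> a" using m lw ip by simp
      moreover have "ends p u"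
      proof -
        have d: "drop (n-p) u = replicate p True"
        proof (rule nth_equalityI)
          show "length (drop (n - p) u) = length (replicate p True)" using n_def ip by simp
          fix j assume "j < length (drop (n - p) u)"
          hence j: "j < p" using n_def ip by simp
          have "w!(i+j)" using h j by simp
          moreover have "i + j < length u" using j ip n_def by simp
          ultimately have "u!(i+j)" using w by (simp add: nth_append)
          thus "drop (n - p) u ! j = replicate p True ! j" using j ip n_def by simp
        qed
        have "u = take (n-p) u @ drop (n-p) u" by simp
        with d show ?thesis unfolding ends_def by metis
      qed
      ultimately show ?thesis by simp
    qed
  qed
next
  assume "detects (seed_pq p q) u \<or> p+q+1 \<le> a \<or> (q \<le> a \<and> ends p u)"
  then consider (A) "detects (seed_pq p q) u" | (B) "p+q+1 \<le> a" | (C) "q \<le> a" "ends p u" by blast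
  then show "detects (seed_pq p q) w"
  proof cases
    case A
    then obtain i where m: "i + (p+q+1) \<le> length u" and h: "\<forall>t<p+q+1. t \<noteq> p \<longrightarrow> u!(i+t)"
      by (auto simp: detects_def matches_iff)
    have "matches_at (seed_pq p q) w i" unfolding matches_iff
      using m h w by (auto simp: nth_append)
    then show ?thesis by (auto simp: detects_def)
  next
    case B
    have "matches_at (seed_pq p q) w (length u + 1)" unfolding matches_iff
      using B w by (auto simp: nth_append)
    then show ?thesis by (auto simp: detects_def)
  next
    case C
    then obtain v where v: "u = v @ replicate p True" by (auto simp: ends_def)
    have "matches_at (seed_pq p q) w (length v)" unfolding matches_iff
    proof (intro conjI allI impI)
      show "length v + (p + q + 1) \<le> length w" using w v C by simp
      fix t assume t: "t < p+q+1" "t \<noteq> p"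
      show "w ! (length v + t)"
      proof (cases "t < p")
        case True then show ?thesis using w v by (simp add: nth_append)
      next
        case False
        then have "t = p + 1 + (t - p - 1)" "t - p - 1 < a" using t C by auto
        then show ?thesis using w v
          by (simp add: nth_append)
      qed
    qed
    then show ?thesis by (auto simp: detects_def)
  qed
qed

lemma nz_app[simp]: "num_zeros (u @ False # replicate a True) = Suc (num_zeros u)"
  by (simp add: num_zeros_def)

lemma decomp: "0 < num_zeros w \<Longrightarrow> \<exists>u a. w = u @ [False] @ replicate a True"
proof (induction w rule: rev_induct)
  case Nil then show ?case by (simp add: num_zeros_def)
next
  case (snoc x xs)
  show ?case
  proof (cases x)
    case False then show ?thesis by (intro exI[of _ xs] exI[of _ 0]) simp
  next
    case True
    then have "0 < num_zeros xs" using snoc.prems by (simp add: num_zeros_def)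
    then obtain u a where "xs = u @ [False] @ replicate a True" using snoc.IH by blast
    then show ?thesis using True
      by (intro exI[of _ u] exI[of _ "Suc a"]) (simp add: replicate_append_same)
  qed
qed

lemma not_ends: "a < p \<Longrightarrow> \<not> ends p (u @ [False] @ replicate a True)"
proof
  assume a: "a < p" and "ends p (u @ [False] @ replicate a True)"
  then obtain v where v: "u @ [False] @ replicate a True = v @ replicate p True" by (auto simp: ends_def)
  have "rev (u @ [False] @ replicate a True) ! a = rev (v @ replicate p True) ! a" using v by simp
  then show False using a by (simp add: nth_append)
qed

lemma ends_app: "p \<le> a \<Longrightarrow> ends p (u @ [False] @ replicate a True)"
proof -
  assume "p \<le> a"
  then have "replicate a True = replicate (a - p) True @ replicate p True"
    by (simp add: replicate_add[symmetric])
  then show ?thesis unfolding ends_def by (intro exI[of _ "u @ [False] @ replicate (a - p) True"]) simp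
qed

fun Tf :: "nat \<Rightarrow> nat \<Rightarrow> nat \<Rightarrow> nat" and Mf :: "nat \<Rightarrow> nat \<Rightarrow> nat \<Rightarrow> nat" where
  "Tf p q 0 = p + q"
| "Tf p q (Suc k) = max (Mf p q k + 1 + p + q) (Tf p q k + q)"
| "Mf p q 0 = p - 1"
| "Mf p q (Suc k) = max (Mf p q k + p) (Tf p q k + q)"

fun Wt :: "nat \<Rightarrow> nat \<Rightarrow> nat \<Rightarrow> bool list" and Wm :: "nat \<Rightarrow> nat \<Rightarrow> nat \<Rightarrow> bool list" where
  "Wt p q 0 = replicate (p+q) True"
| "Wt p q (Suc k) = (if Tf p q k + q \<le> Mf p q k + 1 + p + q
     then Wm p q k @ [False] @ replicate (p+q) True
     else Wt p q k @ [False] @ replicate (q-1) True)"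
| "Wm p q 0 = replicate (p-1) True"
| "Wm p q (Suc k) = (if Tf p q k + q \<le> Mf p q k + p
     then Wm p q k @ [False] @ replicate (p-1) True
     else Wt p q k @ [False] @ replicate (q-1) True)"

lemma upper:
  assumes "1 \<le> q" "q \<le> p"
  shows "num_zeros w = k \<Longrightarrow> \<not> detects (seed_pq p q) w \<Longrightarrow>
     length w \<le> Tf p q k \<and> (\<not> ends p w \<longrightarrow> length w \<le> Mf p q k)"
proof (induction k arbitrary: w)
  case 0
  then have "\<forall>y\<in>set w. y = True" by (auto simp: num_zeros_def filter_empty_conv)
  then have w: "w = replicate (length w) True" by (simp add: replicate_length_same)
  then have l: "length w \<le> p + q" using 0 det_rep[of p q "length w"] by simp
  have "\<not> ends p w \<longrightarrow> length w \<le> p - 1"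
  proof
    assume ne: "\<not> ends p w"
    show "length w \<le> p - 1"
    proof (rule ccontr)
      assume "\<not> length w \<le> p - 1"
      then have "replicate (length w) True = replicate (length w - p) True @ replicate p True"
        by (simp add: replicate_add[symmetric])
      then have "ends p w" using w unfolding ends_def by metis
      with ne show False by simp
    qed
  qed
  with l show ?case by simp
next
  case (Suc k)
  obtain u a where w: "w = u @ [False] @ replicate a True" using decomp[of w] Suc.prems by auto
  have nu: "num_zeros u = k" using w Suc.prems by simp
  have du: "\<not> detects (seed_pq p q) u" "\<not> p+q+1 \<le> a" "q \<le> a \<longrightarrow> \<not> ends p u"
    using det_app[OF w, of p q] Suc.prems by auto
  have IH: "length u \<le> Tf p q k" "\<not> ends p u \<longrightarrow> length u \<le> Mf p q k"
    using Suc.IH[OF nu du(1)] by auto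
  have lw: "length w = length u + 1 + a" using w by simp
  have T: "length w \<le> Tf p q (Suc k)"
  proof (cases "q \<le> a")
    case True then show ?thesis using IH du lw by auto
  next
    case False then show ?thesis using IH du lw by auto
  qed
  have M: "\<not> ends p w \<longrightarrow> length w \<le> Mf p q (Suc k)"
  proof
    assume "\<not> ends p w"
    then have "a < p" using ends_app[of p a u] w by (cases "p \<le> a") auto
    show "length w \<le> Mf p q (Suc k)"
    proof (cases "q \<le> a")
      case True then show ?thesis using IH du lw \<open>a < p\<close> by auto
    next
      case False then show ?thesis using IH du lw by auto
    qed
  qed
  from T M show ?case by simp
qed

lemma witness:
  assumes "1 \<le> q" "q \<le> p"
  shows "num_zeros (Wt p q k) = k \<and> length (Wt p q k) = Tf p q k \<and> \<not> detects (seed_pq p q) (Wt p q k)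
    \<and> num_zeros (Wm p q k) = k \<and> length (Wm p q k) = Mf p q k \<and> \<not> detects (seed_pq p q) (Wm p q k)
    \<and> \<not> ends p (Wm p q k)"
proof (induction k)
  case 0
  have "\<not> ends p (replicate (p-1) True)"
  proof
    assume "ends p (replicate (p-1) True)"
    then obtain v where "replicate (p-1) True = v @ replicate p True" by (auto simp: ends_def)
    then have "length (replicate (p-1) True) = length (v @ replicate p True)" by simp
    then show False using assms by simp
  qed
  then show ?case using assms by (simp add: num_zeros_def det_rep)
next
  case (Suc k)
  have dt: "\<not> detects (seed_pq p q) (Wt p q (Suc k))"
  proof (cases "Tf p q k + q \<le> Mf p q k + 1 + p + q")
    case True then show ?thesis
      using Suc.IH assms det_app[where u="Wm p q k" and a="p+q" and p=p and q=q, OF refl] by auto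
  next
    case False then show ?thesis
      using Suc.IH assms det_app[where u="Wt p q k" and a="q-1" and p=p and q=q, OF refl] by auto
  qed
  have dm: "\<not> detects (seed_pq p q) (Wm p q (Suc k))"
  proof (cases "Tf p q k + q \<le> Mf p q k + p")
    case True then show ?thesis
      using Suc.IH assms det_app[where u="Wm p q k" and a="p-1" and p=p and q=q, OF refl] by auto
  next
    case False then show ?thesis
      using Suc.IH assms det_app[where u="Wt p q k" and a="q-1" and p=p and q=q, OF refl] by auto
  qed
  have em: "\<not> ends p (Wm p q (Suc k))"
    using assms not_ends[of "p-1" p "Wm p q k"] not_ends[of "q-1" p "Wt p q k"] by auto
  show ?case using Suc.IH dt dm em assms by auto
qed

lemma closed1:
  assumes "2*q+1 \<le> p"
  shows "Tf p q k = (k+1)*p + q \<and> Mf p q k + 1 = (k+1)*p"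
  using assms by (induction k) (auto simp: max_def algebra_simps)

lemma closed2:
  assumes "1 \<le> q" "q \<le> p" "p \<le> 2*q+1"
  shows "Mf p q (2*l) + 1 = (l+1)*p + 2*l*q + l \<and> Tf p q (2*l) = (l+1)*p + (2*l+1)*q + l
    \<and> Mf p q (2*l+1) = (l+1)*p + (2*l+2)*q + l \<and> Tf p q (2*l+1) = (l+2)*p + (2*l+1)*q + l"
proof (induction l)
  case 0 then show ?case using assms by (auto simp: max_def)
next
  case (Suc l)
  have e1: "2 * Suc l = Suc (2*l+1)" by simp
  have e2: "2 * Suc l + 1 = Suc (Suc (2*l+1))" by simp
  show ?case unfolding e1 e2 using Suc.IH assms
    by (simp only: Tf.simps Mf.simps) (auto simp: max_def algebra_simps)
qed

lemma maxlen:
  assumes "1 \<le> q" "q \<le> p"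
  shows "max_undetected_len (seed_pq p q) k = Tf p q k"
  unfolding max_undetected_len_def
proof (rule Max_eqI)
  let ?S = "{length w |w. num_zeros w = k \<and> \<not> detects (seed_pq p q) w}"
  show "finite ?S"
    by (rule finite_subset[of _ "{..Tf p q k}"]) (use upper[OF assms] in auto)
  show "\<And>y. y \<in> ?S \<Longrightarrow> y \<le> Tf p q k" using upper[OF assms] by auto
  show "Tf p q k \<in> ?S" using witness[OF assms, of k] by (auto intro!: exI[of _ "Wt p q k"])
qed

lemma crit:
  assumes "1 \<le> q" "q \<le> p"
  shows "critical_length (seed_pq p q) k = Tf p q k + 1"
  unfolding critical_length_def
proof (rule Least_equality)
  show "\<forall>w. Tf p q k + 1 \<le> length w \<longrightarrow> num_zeros w = k \<longrightarrow> detects (seed_pq p q) w"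
    using upper[OF assms] by fastforce
  fix m assume m: "\<forall>w. m \<le> length w \<longrightarrow> num_zeros w = k \<longrightarrow> detects (seed_pq p q) w"
  show "Tf p q k + 1 \<le> m"
  proof (rule ccontr)
    assume "\<not> Tf p q k + 1 \<le> m"
    then show False using m witness[OF assms, of k] by auto
  qed
qed

theorem mainTheorem2:
  fixes p q :: nat
  assumes "1 \<le> q" and "q \<le> p"
  shows "(2 * q + 1 \<le> p \<longrightarrow>
            (\<forall>k\<ge>1. max_undetected_len (seed_pq p q) k = (k + 1) * p + q))
       \<and> (p \<le> 2 * q + 1 \<longrightarrow>
            (\<forall>l. max_undetected_len (seed_pq p q) (2 * l + 1)
                   = (l + 2) * p + (2 * l + 1) * q + l)
          \<and> (\<forall>l\<ge>1. max_undetected_len (seed_pq p q) (2 * l)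
                   = (l + 1) * p + (2 * l + 1) * q + l))
       \<and> (\<forall>k\<ge>1. critical_length (seed_pq p q) k = max_undetected_len (seed_pq p q) k + 1)"
proof (intro conjI impI allI)
  fix k :: nat assume "2*q+1 \<le> p" "1 \<le> k"
  then show "max_undetected_len (seed_pq p q) k = (k + 1) * p + q"
    using maxlen[OF assms] closed1[of q p k] by simp
next
  fix l assume h: "p \<le> 2*q+1"
  show "max_undetected_len (seed_pq p q) (2 * l + 1) = (l + 2) * p + (2 * l + 1) * q + l"
    using maxlen[OF assms] closed2[OF assms h, of l] by (simp del: Tf.simps Mf.simps)
next
  fix l :: nat assume h: "p \<le> 2*q+1" "1 \<le> l"
  show "max_undetected_len (seed_pq p q) (2 * l) = (l + 1) * p + (2 * l + 1) * q + l"
    using maxlen[OF assms] closed2[OF assms h(1), of l] by (simp del: Tf.simps Mf.simps)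
next
  fix k :: nat
  show "critical_length (seed_pq p q) k = max_undetected_len (seed_pq p q) k + 1"
    using maxlen[OF assms] crit[OF assms] by simp
qed

end
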